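(* Let $q=2^m$ with $m\ge2$, and let $G=q^2{:}\mathrm{SL}_2(q)$ be the primitive affine group $N\rtimes H$, where $N=\mathbb F_q^2$ acts regularly on itself by translation and $H=\mathrm{SL}_2(q)$ acts naturally on $\mathbb F_q^2$ (degree $q^2$). Then $\kappa(G)\ge3$.
   Context: A derangement is an element fixing no point; $\kappa(G)$ is the number of conjugacy classes of $G$ consisting of derangements. *)

theory Defs
  imports Main
begin

text \<open>The affine map v \<mapsto> A v + w on the plane F^2, where A = (a,b;c,d) and w = (w1,w2).
  Permutations of F^2 are represented as functions, group product = composition.\<close>
definition affine_map :: "'a::field \<Rightarrow> 'a \<Rightarrow> 'a \<Rightarrow> 'a \<Rightarrow> 'a \<Rightarrow> 'a \<Rightarrow> ('a \<times> 'a \<Rightarrow> 'a \<times> 'a)" where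
  "affine_map a b c d w1 w2 = (\<lambda>(x, y). (a * x + b * y + w1, c * x + d * y + w2))"

definition ASL2 :: "('a::field \<times> 'a \<Rightarrow> 'a \<times> 'a) set" where
  "ASL2 = {affine_map a b c d w1 w2 | a b c d w1 w2. a * d - b * c = 1}"

definition derangement :: "('b \<Rightarrow> 'b) \<Rightarrow> bool" where
  "derangement g \<longleftrightarrow> (\<forall>v. g v \<noteq> v)"

definition conj_class :: "('b \<Rightarrow> 'b) set \<Rightarrow> ('b \<Rightarrow> 'b) \<Rightarrow> ('b \<Rightarrow> 'b) set" where
  "conj_class G g = {h \<circ> g \<circ> inv h | h. h \<in> G}"

definition conj_classes :: "('b \<Rightarrow> 'b) set \<Rightarrow> ('b \<Rightarrow> 'b) set set" where
  "conj_classes G = {conj_class G g | g. g \<in> G}"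

definition kappa :: "('b \<Rightarrow> 'b) set \<Rightarrow> nat" where
  "kappa G = card {C \<in> conj_classes G. \<forall>g\<in>C. derangement g}"

end

theory Submission
  imports Defs
begin

lemma char2:
  fixes m :: nat
  assumes "card (UNIV :: 'a::{finite,field} set) = 2 ^ m" and "m \<ge> 1"
  shows "(1::'a) + 1 = 0"
proof -
  have b: "bij (\<lambda>x::'a. x + 1)"
    by (rule bijI') (auto intro: exI[of _ "_ - 1"])
  have "(\<Sum>x\<in>UNIV. x + (1::'a)) = (\<Sum>x\<in>UNIV. x)"
    using sum.reindex_bij_betw[OF b, of "\<lambda>x. x"] by simp
  moreover have "(\<Sum>x\<in>UNIV. x + (1::'a)) = (\<Sum>x\<in>UNIV. x) + of_nat (card (UNIV::'a set))"
    by (simp add: sum.distrib)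
  ultimately have "of_nat (card (UNIV::'a set)) = (0::'a)" by simp
  hence "(2::'a) ^ m = 0" using assms(1) by simp
  hence "(2::'a) = 0" by simp
  thus ?thesis by simp
qed

lemma affine_bij:
  fixes a b c d w1 w2 :: "'a::field"
  assumes "a * d - b * c = 1"
  shows "bij (affine_map a b c d w1 w2)"
proof -
  let ?h = "affine_map a b c d w1 w2"
  let ?k = "\<lambda>(x::'a, y::'a). (d*(x-w1) - b*(y-w2), -c*(x-w1) + a*(y-w2))"
  have e1: "d * (a * x + b * y) - b * (c * x + d * y) = (a*d-b*c) * x" for x y :: 'a
    by (simp add: algebra_simps)
  have e2: "- c * (a * x + b * y) + a * (c * x + d * y) = (a*d-b*c) * y" for x y :: 'a
    by (simp add: algebra_simps)
  have e3: "a * (d * x - b * y) + b * (- c * x + a * y) = (a*d-b*c) * x" for x y :: 'a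
    by (simp add: algebra_simps)
  have e4: "c * (d * x - b * y) + d * (- c * x + a * y) = (a*d-b*c) * y" for x y :: 'a
    by (simp add: algebra_simps)
  have "?k \<circ> ?h = id"
    using e1 e2 assms by (auto simp: affine_map_def fun_eq_iff)
  moreover have "?h \<circ> ?k = id"
  proof (rule ext, clarsimp simp: affine_map_def)
    fix x y
    show "a * (d * (x - w1) - b * (y - w2)) + b * (a * (y - w2) - c * (x - w1)) + w1 = x \<and>
       c * (d * (x - w1) - b * (y - w2)) + d * (a * (y - w2) - c * (x - w1)) + w2 = y"
      using e3[of "x-w1" "y-w2"] e4[of "x-w1" "y-w2"] assms by (simp add: algebra_simps)
  qed
  ultimately show ?thesis using o_bij by blast
qed

lemma ASL2_bij: "h \<in> ASL2 \<Longrightarrow> bij h"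
  unfolding ASL2_def using affine_bij by blast

definition gg :: "'a::field \<Rightarrow> ('a \<times> 'a \<Rightarrow> 'a \<times> 'a)" where
  "gg c = affine_map 1 1 0 1 0 c"

lemma gg_in: "gg c \<in> ASL2"
  unfolding gg_def ASL2_def by force

lemma gg_der: "c \<noteq> 0 \<Longrightarrow> derangement (gg c)"
  unfolding gg_def derangement_def affine_map_def by auto

lemma conj_der:
  assumes "f \<in> conj_class ASL2 g" "derangement g"
  shows "derangement f"
proof -
  obtain h where h: "h \<in> ASL2" "f = h \<circ> g \<circ> inv h" using assms(1) unfolding conj_class_def by auto
  have bh: "bij h" using ASL2_bij h(1) .
  show ?thesis unfolding derangement_def
  proof
    fix v
    show "f v \<noteq> v"
    proof
      assume "f v = v"
      hence "h (g (inv h v)) = h (inv h v)" using h(2) bij_inv_eq_iff[OF bh] bh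
        by (simp add: bij_is_surj surj_f_inv_f)
      hence "g (inv h v) = inv h v" using bh by (simp add: bij_is_inj inj_eq)
      thus False using assms(2) unfolding derangement_def by blast
    qed
  qed
qed

lemma gg_noconj:
  assumes two: "(1::'a::field) + 1 = 0"
  assumes "gg d \<in> conj_class ASL2 (gg (c::'a))"
  shows "d = c"
proof -
  obtain h where h: "h \<in> ASL2" "gg d = h \<circ> gg c \<circ> inv h" using assms(2) unfolding conj_class_def by auto
  have bh: "bij h" using ASL2_bij h(1) .
  have eq: "gg d (h v) = h (gg c v)" for v
    using h(2) bh by (simp add: bij_is_inj inv_f_f)
  obtain a b c' d' w1 w2 where hh: "h = affine_map a b c' d' w1 w2" "a * d' - b * c' = 1"
    using h(1) unfolding ASL2_def by auto
  have q1: "w1+w2 = b*c+w1" "w2+d = d'*c+w2"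
    using eq[of "(0,0)"] by (auto simp: hh gg_def affine_map_def)
  have q2: "a+w1+c'+w2 = a+b*c+w1"
    using eq[of "(1,0)"] by (auto simp: hh gg_def affine_map_def)
  have q3: "b+w1+d'+w2 = a+b*(1+c)+w1"
    using eq[of "(0,1)"] by (auto simp: hh gg_def affine_map_def algebra_simps)
  have c0: "c' = 0" using q1 q2 by (simp add: algebra_simps)
  have da: "d' = a" using q1 q3 by (simp add: algebra_simps)
  have "a * a = 1" using hh(2) c0 da by simp
  hence "(a + 1) * (a + 1) = 0" using two by (simp add: algebra_simps)
  hence a1: "a + 1 = 0" by simp
  have "a = (a + 1) + 1" using two by (simp add: add.assoc)
  hence "a = 1" using a1 by simp
  thus ?thesis using q1 da by simp
qed

theorem lemma4p7:
  fixes m :: nat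
  assumes "card (UNIV :: 'a set) = 2 ^ m" and "m \<ge> 2"
  shows "kappa (ASL2 :: ('a::{finite,field} \<times> 'a \<Rightarrow> 'a \<times> 'a) set) \<ge> 3"
proof -
  have two: "(1::'a) + 1 = 0" using char2[OF assms(1)] assms(2) by simp
  have "card (UNIV - {0::'a}) = 2^m - 1" using assms(1) by (simp add: card_Diff_singleton)
  moreover have "(2::nat)^m \<ge> 2^2" using assms(2) by (rule power_increasing) simp
  ultimately have "3 \<le> card (UNIV - {0::'a})" by simp
  then obtain T where T: "T \<subseteq> UNIV - {0::'a}" "card T = 3" by (meson obtain_subset_with_card_n)
  then obtain x y z where xyz: "T = {x,y,z}" "x \<noteq> y" "y \<noteq> z" "x \<noteq> z" by (auto simp: card_3_iff)
  have nz: "x \<noteq> 0" "y \<noteq> 0" "z \<noteq> 0" using T(1) xyz(1) by auto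
  let ?C = "\<lambda>c. conj_class (ASL2::('a \<times> 'a \<Rightarrow> 'a \<times> 'a) set) (gg c)"
  have idin: "id \<in> (ASL2::('a \<times> 'a \<Rightarrow> 'a \<times> 'a) set)"
    unfolding ASL2_def by (rule CollectI, rule exI[of _ 1], rule exI[of _ 0], rule exI[of _ 0],
      rule exI[of _ 1], rule exI[of _ 0], rule exI[of _ 0]) (auto simp: affine_map_def fun_eq_iff)
  have self: "gg c \<in> ?C c" for c
    unfolding conj_class_def using idin by force
  have inj: "?C c = ?C d \<Longrightarrow> d = c" for c d
  proof -
    assume e: "?C c = ?C d"
    have "gg d \<in> ?C c" unfolding e by (rule self)
    thus "d = c" by (rule gg_noconj[OF two])
  qed
  have mem: "?C c \<in> {C \<in> conj_classes ASL2. \<forall>g\<in>C. derangement g}" if "c \<noteq> 0" for c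
  proof (rule CollectI, rule conjI)
    show "?C c \<in> conj_classes ASL2" unfolding conj_classes_def using gg_in[of c] by blast
    show "\<forall>g\<in>?C c. derangement g" using conj_der[of _ "gg c"] gg_der[OF that] by blast
  qed
  have sub: "{?C x, ?C y, ?C z} \<subseteq> {C \<in> conj_classes ASL2. \<forall>g\<in>C. derangement g}"
    using mem nz by blast
  have "card {?C x, ?C y, ?C z} = 3" proof -
    have "?C x \<noteq> ?C y" "?C y \<noteq> ?C z" "?C x \<noteq> ?C z" using xyz inj by metis+
    thus ?thesis by simp
  qed
  have "card {?C x, ?C y, ?C z} \<le> kappa (ASL2::('a \<times> 'a \<Rightarrow> 'a \<times> 'a) set)"
    unfolding kappa_def by (rule card_mono[OF finite sub])
  thus ?thesis using \<open>card {?C x, ?C y, ?C z} = 3\<close> by simp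
qed

end
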